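(* Let $m_{11},m_{12},m_{13},l_1,l_2\in k$ with $(m_{11},m_{12},m_{13})\neq0$, $m_{12}l_1^2+m_{13}l_2^2=m_{11}$, $l_1=0$ and $l_2\neq0$, and let $M=\begin{pmatrix}m_{11}&m_{12}&m_{13}\\ l_1m_{11}&l_1m_{12}&l_1m_{13}\\ l_2m_{11}&l_2m_{12}&l_2m_{13}\end{pmatrix}$. Then: (1) if $m_{12}\neq0$ and $m_{13}\neq0$, then $\mathcal{A}_{\mathcal{O}_{-1}(k^3)}(M)\cong\mathcal{A}_{\mathcal{O}_{-1}(k^3)}(E_{11}+E_{12}+E_{13}+E_{31}+E_{32}+E_{33})$; (2) if $m_{12}=0$ and $m_{13}\neq0$, then $\mathcal{A}_{\mathcal{O}_{-1}(k^3)}(M)\cong\mathcal{A}_{\mathcal{O}_{-1}(k^3)}(E_{11}+E_{13}+E_{31}+E_{33})$; (3) if $m_{12}\neq0$ and $m_{13}=0$, then $\mathcal{A}_{\mathcal{O}_{-1}(k^3)}(M)\cong\mathcal{A}_{\mathcal{O}_{-1}(k^3)}(E_{12}+E_{32})$.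
   Context: $k$ is an algebraically closed field of characteristic zero. $E_{ij}$ denotes the $3\times3$ matrix unit with $1$ in position $(i,j)$. For $M=(m_{ij})\in M_3(k)$, $\mathcal{A}_{\mathcal{O}_{-1}(k^3)}(M)$ is the connected cochain DG algebra whose underlying graded algebra is generated by degree-one $x_1,x_2,x_3$ subject to $x_ix_j=-x_jx_i$ ($i<j$), with differential determined by $\partial(x_i)=\sum_j m_{ij}x_j^2$ and the Leibniz rule; $\cong$ means isomorphism of DG algebras. *)

theory Defs
  imports "HOL-Computational_Algebra.Polynomial"
begin

text \<open>Concrete model of the skew polynomial algebra O_{-1}(k^3) = k<x1,x2,x3>/(xi xj + xj xi, i<j),
  via its PBW basis of ordered monomials x1^a1 x2^a2 x3^a3 (indexed by exponent triples).\<close>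

type_synonym 'k skp = "nat \<times> nat \<times> nat \<Rightarrow> 'k"

definition skcarrier :: "'k::field skp set" where
  "skcarrier = {p. finite {m. p m \<noteq> 0}}"

text \<open>(x1^a1 x2^a2 x3^a3)(x1^b1 x2^b2 x3^b3) = (-1)^(b1(a2+a3)+b2 a3) x1^(a1+b1) x2^(a2+b2) x3^(a3+b3)\<close>
definition skmul :: "'k::field skp \<Rightarrow> 'k skp \<Rightarrow> 'k skp" where
  "skmul p q = (\<lambda>(m1, m2, m3).
     \<Sum>(a1, a2, a3) \<in> {0..m1} \<times> {0..m2} \<times> {0..m3}.
       (-1) ^ ((m1 - a1) * (a2 + a3) + (m2 - a2) * a3) * p (a1, a2, a3) * q (m1 - a1, m2 - a2, m3 - a3))"

definition skadd :: "'k::field skp \<Rightarrow> 'k skp \<Rightarrow> 'k skp" where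
  "skadd p q = (\<lambda>m. p m + q m)"

definition sksmult :: "'k::field \<Rightarrow> 'k skp \<Rightarrow> 'k skp" where
  "sksmult c p = (\<lambda>m. c * p m)"

definition skone :: "'k::field skp" where
  "skone = (\<lambda>m. if m = (0, 0, 0) then 1 else 0)"

definition skgen :: "nat \<Rightarrow> 'k::field skp" where
  "skgen i = (\<lambda>m. if m = (if i = 1 then (1, 0, 0) else if i = 2 then (0, 1, 0) else (0, 0, 1))
                  then 1 else 0)"

definition mdeg :: "nat \<times> nat \<times> nat \<Rightarrow> nat" where
  "mdeg m = (case m of (a, b, c) \<Rightarrow> a + b + c)"

definition homog :: "nat \<Rightarrow> 'k::field skp \<Rightarrow> bool" where
  "homog n p \<longleftrightarrow> p \<in> skcarrier \<and> (\<forall>m. p m \<noteq> 0 \<longrightarrow> mdeg m = n)"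

definition mat3 :: "'k \<Rightarrow> 'k \<Rightarrow> 'k \<Rightarrow> 'k \<Rightarrow> 'k \<Rightarrow> 'k \<Rightarrow> 'k \<Rightarrow> 'k \<Rightarrow> 'k \<Rightarrow> nat \<Rightarrow> nat \<Rightarrow> 'k::zero" where
  "mat3 a11 a12 a13 a21 a22 a23 a31 a32 a33 = (\<lambda>i j.
     if i = 1 then (if j = 1 then a11 else if j = 2 then a12 else if j = 3 then a13 else 0)
     else if i = 2 then (if j = 1 then a21 else if j = 2 then a22 else if j = 3 then a23 else 0)
     else if i = 3 then (if j = 1 then a31 else if j = 2 then a32 else if j = 3 then a33 else 0)
     else 0)"

definition is_diff :: "(nat \<Rightarrow> nat \<Rightarrow> 'k::field) \<Rightarrow> ('k skp \<Rightarrow> 'k skp) \<Rightarrow> bool" where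
  "is_diff M d \<longleftrightarrow>
     (\<forall>p. p \<notin> skcarrier \<longrightarrow> d p = (\<lambda>_. 0)) \<and>
     (\<forall>p \<in> skcarrier. d p \<in> skcarrier) \<and>
     (\<forall>p \<in> skcarrier. \<forall>q \<in> skcarrier. d (skadd p q) = skadd (d p) (d q)) \<and>
     (\<forall>c. \<forall>p \<in> skcarrier. d (sksmult c p) = sksmult c (d p)) \<and>
     (\<forall>n p. homog n p \<longrightarrow> homog (Suc n) (d p)) \<and>
     (\<forall>n p q. homog n p \<longrightarrow> q \<in> skcarrier \<longrightarrow>
        d (skmul p q) = skadd (skmul (d p) q) (sksmult ((-1) ^ n) (skmul p (d q)))) \<and>
     (\<forall>i \<in> {1, 2, 3}. d (skgen i) =
        (\<lambda>m. \<Sum>j \<in> {1, 2, 3}. M i j * skmul (skgen j) (skgen j) m))"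

definition dga_diff :: "(nat \<Rightarrow> nat \<Rightarrow> 'k::field) \<Rightarrow> 'k skp \<Rightarrow> 'k skp" where
  "dga_diff M = (THE d. is_diff M d)"

definition dga_iso :: "(nat \<Rightarrow> nat \<Rightarrow> 'k::field) \<Rightarrow> (nat \<Rightarrow> nat \<Rightarrow> 'k) \<Rightarrow> bool" where
  "dga_iso M N \<longleftrightarrow> (\<exists>f. bij_betw f skcarrier skcarrier \<and>
     (\<forall>p \<in> skcarrier. \<forall>q \<in> skcarrier. f (skadd p q) = skadd (f p) (f q)) \<and>
     (\<forall>c. \<forall>p \<in> skcarrier. f (sksmult c p) = sksmult c (f p)) \<and>
     (\<forall>p \<in> skcarrier. \<forall>q \<in> skcarrier. f (skmul p q) = skmul (f p) (f q)) \<and>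
     f skone = skone \<and>
     (\<forall>n p. homog n p \<longrightarrow> homog n (f p)) \<and>
     (\<forall>p \<in> skcarrier. f (dga_diff M p) = dga_diff N (f p)))"

end

theory Submission
  imports Defs
begin


definition mon :: "nat \<times> nat \<times> nat \<Rightarrow> 'k::field skp" where
  "mon a = (\<lambda>m. if m = a then 1 else 0)"

fun padd :: "nat \<times> nat \<times> nat \<Rightarrow> nat \<times> nat \<times> nat \<Rightarrow> nat \<times> nat \<times> nat" where
  "padd (a1,a2,a3) (b1,b2,b3) = (a1+b1, a2+b2, a3+b3)"

fun pleq :: "nat \<times> nat \<times> nat \<Rightarrow> nat \<times> nat \<times> nat \<Rightarrow> bool" where
  "pleq (a1,a2,a3) (b1,b2,b3) = (a1 \<le> b1 \<and> a2 \<le> b2 \<and> a3 \<le> b3)"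

fun psub :: "nat \<times> nat \<times> nat \<Rightarrow> nat \<times> nat \<times> nat \<Rightarrow> nat \<times> nat \<times> nat" where
  "psub (a1,a2,a3) (b1,b2,b3) = (a1-b1, a2-b2, a3-b3)"

fun sg3 :: "nat \<times> nat \<times> nat \<Rightarrow> nat \<times> nat \<times> nat \<Rightarrow> 'k::field" where
  "sg3 (a1,a2,a3) (b1,b2,b3) = (-1) ^ (b1 * (a2 + a3) + b2 * a3)"

lemma skmul_mono_left:
  "skmul (mon a) q m = (if pleq a m then sg3 a (psub m a) * q (psub m a) else 0)"
proof -
  obtain a1 a2 a3 where a: "a = (a1,a2,a3)" by (cases a) auto
  obtain m1 m2 m3 where m: "m = (m1,m2,m3)" by (cases m) auto
  have "skmul (mon a) q m = (\<Sum>x \<in> {0..m1} \<times> {0..m2} \<times> {0..m3}.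
     (if x = a then (-1) ^ ((m1 - a1) * (a2 + a3) + (m2 - a2) * a3) * q (m1 - a1, m2 - a2, m3 - a3) else 0))"
    unfolding skmul_def m a mon_def prod.case
    by (rule sum.cong) (auto split: prod.splits)
  also have "\<dots> = (if a \<in> {0..m1} \<times> {0..m2} \<times> {0..m3} then (-1) ^ ((m1 - a1) * (a2 + a3) + (m2 - a2) * a3) * q (m1 - a1, m2 - a2, m3 - a3) else 0)"
    by (subst sum.delta) auto
  finally show ?thesis by (simp add: a m)
qed

lemma skmul_mono_right:
  "skmul p (mon b) m = (if pleq b m then sg3 (psub m b) b * p (psub m b) else 0)"
proof -
  obtain b1 b2 b3 where b: "b = (b1,b2,b3)" by (cases b) auto
  obtain m1 m2 m3 where m: "m = (m1,m2,m3)" by (cases m) auto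
  have "skmul p (mon b) m = (\<Sum>x \<in> {0..m1} \<times> {0..m2} \<times> {0..m3}.
     (if x = (m1-b1,m2-b2,m3-b3) \<and> pleq b m then (-1) ^ (b1 * ((m2-b2) + (m3-b3)) + b2 * (m3-b3)) * p (m1-b1,m2-b2,m3-b3) else 0))"
    unfolding skmul_def m b mon_def prod.case
    by (rule sum.cong) (auto split: prod.splits simp: add.commute)
  also have "\<dots> = (\<Sum>x \<in> {0..m1} \<times> {0..m2} \<times> {0..m3}.
     (if x = (m1-b1,m2-b2,m3-b3) then (if pleq b m then (-1) ^ (b1 * ((m2-b2) + (m3-b3)) + b2 * (m3-b3)) * p (m1-b1,m2-b2,m3-b3) else 0) else 0))"
    by (rule sum.cong) auto
  also have "\<dots> = (if pleq b m then (-1) ^ (b1 * ((m2-b2) + (m3-b3)) + b2 * (m3-b3)) * p (m1-b1,m2-b2,m3-b3) else 0)"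
    by (subst sum.delta) auto
  finally show ?thesis by (simp add: b m)
qed

lemma skmul_mono_mono:
  "skmul (mon a) (mon b) m = sg3 a b * (mon (padd a b) m :: 'k::field)"
  unfolding skmul_mono_left
  by (cases a; cases b; cases m) (auto simp: mon_def)

lemma skmul_sum_left:
  "finite S \<Longrightarrow> skmul (\<lambda>m. \<Sum>x\<in>S. G x m) q m = (\<Sum>x\<in>S. skmul (G x) q m)"
  unfolding skmul_def
  by (cases m) (simp add: case_prod_beta sum_distrib_left sum_distrib_right sum.swap[of _ S])

lemma skmul_sum_right:
  "finite S \<Longrightarrow> skmul p (\<lambda>m. \<Sum>x\<in>S. G x m) m = (\<Sum>x\<in>S. skmul p (G x) m)"
  unfolding skmul_def
  by (cases m) (simp add: case_prod_beta sum_distrib_left sum_distrib_right sum.swap[of _ S])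

lemma skmul_smult_left:
  "skmul (\<lambda>m. c * G m) q m = c * skmul G q m"
  unfolding skmul_def
  by (cases m) (simp add: case_prod_beta sum_distrib_left algebra_simps)

lemma skmul_smult_right:
  "skmul p (\<lambda>m. c * G m) m = c * skmul p G m"
  unfolding skmul_def
  by (cases m) (simp add: case_prod_beta sum_distrib_left algebra_simps)

lemma skmul_add_left:
  "skmul (\<lambda>m. F m + G m) q m = skmul F q m + skmul G q m"
  unfolding skmul_def
  by (cases m) (simp add: case_prod_beta sum.distrib algebra_simps)

lemma skmul_add_right:
  "skmul p (\<lambda>m. F m + G m) m = skmul p F m + skmul p G m"
  unfolding skmul_def
  by (cases m) (simp add: case_prod_beta sum.distrib algebra_simps)



definition ev :: "nat \<Rightarrow> nat \<times> nat \<times> nat" where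
  "ev i = (if i = 1 then (1,0,0) else if i = 2 then (0,1,0) else (0,0,1))"

fun comp :: "nat \<Rightarrow> nat \<times> nat \<times> nat \<Rightarrow> nat" where
  "comp i (a1,a2,a3) = (if i = 1 then a1 else if i = 2 then a2 else a3)"

fun eps :: "nat \<Rightarrow> nat \<times> nat \<times> nat \<Rightarrow> 'k::field" where
  "eps i (a1,a2,a3) = (if i = 1 then 1 else if i = 2 then (-1)^a1 else (-1)^(a1+a2))"

definition dc :: "nat \<Rightarrow> nat \<times> nat \<times> nat \<Rightarrow> 'k::field" where
  "dc i a = (if odd (comp i a) then eps i a else 0)"

definition tgt :: "nat \<Rightarrow> nat \<Rightarrow> nat \<times> nat \<times> nat \<Rightarrow> nat \<times> nat \<times> nat" where
  "tgt i j a = padd (psub a (ev i)) (padd (ev j) (ev j))"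

lemma sg3_shift_left: "j \<in> {1,2,3} \<Longrightarrow> sg3 (padd x (padd (ev j) (ev j))) b = (sg3 x b :: 'k::field)"
  by (cases x; cases b) (auto simp: ev_def minus_one_power_iff)

lemma sg3_shift_right: "j \<in> {1,2,3} \<Longrightarrow> sg3 a (padd y (padd (ev j) (ev j))) = (sg3 a y :: 'k::field)"
  by (cases a; cases y) (auto simp: ev_def minus_one_power_iff algebra_simps)

lemma signC1: "sg3 a b * dc 1 (padd a b) = dc 1 a * sg3 (psub a (ev 1)) b + (-1)^mdeg a * dc 1 b * (sg3 a (psub b (ev 1)) :: 'k::field)"
  by (cases a; cases b) (auto simp: dc_def ev_def mdeg_def minus_one_power_iff)

lemma signC2: "sg3 a b * dc 2 (padd a b) = dc 2 a * sg3 (psub a (ev 2)) b + (-1)^mdeg a * dc 2 b * (sg3 a (psub b (ev 2)) :: 'k::field)"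
  by (cases a; cases b) (auto simp: dc_def ev_def mdeg_def minus_one_power_iff)

lemma signC3: "sg3 a b * dc 3 (padd a b) = dc 3 a * sg3 (psub a (ev 3)) b + (-1)^mdeg a * dc 3 b * (sg3 a (psub b (ev 3)) :: 'k::field)"
  by (cases a; cases b) (auto simp: dc_def ev_def mdeg_def minus_one_power_iff)

lemma signC: "i \<in> {1,2,3} \<Longrightarrow> sg3 a b * dc i (padd a b) = dc i a * sg3 (psub a (ev i)) b + (-1)^mdeg a * dc i b * (sg3 a (psub b (ev i)) :: 'k::field)"
  by (metis signC1 signC2 signC3 empty_iff insertE)

lemma dc_even: "even (comp i a) \<Longrightarrow> dc i a = 0"
  by (simp add: dc_def)

lemma odd_sub_aux: "odd (n::nat) \<Longrightarrow> n - Suc 0 + m = n + m - Suc 0"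
  by (cases n) auto

lemma odd_sub_aux2: "odd (n::nat) \<Longrightarrow> m + (n - Suc 0) = m + n - Suc 0"
  by (cases n) auto

lemma tgt_padd_left: "odd (comp i a) \<Longrightarrow> padd (tgt i j a) b = tgt i j (padd a b)"
  by (cases a; cases b) (auto simp: tgt_def ev_def odd_sub_aux odd_sub_aux2 split: if_splits)

lemma tgt_padd_right: "odd (comp i b) \<Longrightarrow> padd a (tgt i j b) = tgt i j (padd a b)"
  by (cases a; cases b) (auto simp: tgt_def ev_def odd_sub_aux odd_sub_aux2 split: if_splits)

lemma key:
  assumes i: "i \<in> {1,2,3}" and j: "j \<in> {1,2,3}"
  shows "sg3 a b * dc i (padd a b) * (mon (tgt i j (padd a b)) m :: 'a::field)
    = dc i a * sg3 (tgt i j a) b * mon (padd (tgt i j a) b) m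
      + (-1) ^ (mdeg a) * dc i b * sg3 a (tgt i j b) * mon (padd a (tgt i j b)) m"
proof -
  have s1: "sg3 (tgt i j a) b = (sg3 (psub a (ev i)) b :: 'a)"
    unfolding tgt_def by (rule sg3_shift_left[OF j])
  have s2: "sg3 a (tgt i j b) = (sg3 a (psub b (ev i)) :: 'a)"
    unfolding tgt_def by (rule sg3_shift_right[OF j])
  have m1: "dc i a * mon (padd (tgt i j a) b) m = dc i a * (mon (tgt i j (padd a b)) m :: 'a)"
    by (cases "odd (comp i a)") (auto simp: dc_even tgt_padd_left)
  have m2: "dc i b * mon (padd a (tgt i j b)) m = dc i b * (mon (tgt i j (padd a b)) m :: 'a)"
    by (cases "odd (comp i b)") (auto simp: dc_even tgt_padd_right)
  have "dc i a * sg3 (tgt i j a) b * (mon (padd (tgt i j a) b) m :: 'a)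
      + (-1) ^ (mdeg a) * dc i b * sg3 a (tgt i j b) * mon (padd a (tgt i j b)) m
      = sg3 (psub a (ev i)) b * (dc i a * mon (padd (tgt i j a) b) m)
      + (-1) ^ (mdeg a) * sg3 a (psub b (ev i)) * (dc i b * mon (padd a (tgt i j b)) m)"
    by (simp add: s1 s2 algebra_simps)
  also have "\<dots> = (dc i a * sg3 (psub a (ev i)) b + (-1)^mdeg a * dc i b * (sg3 a (psub b (ev i)) :: 'a)) * mon (tgt i j (padd a b)) m"
    by (simp add: m1 m2 algebra_simps)
  also have "\<dots> = sg3 a b * dc i (padd a b) * (mon (tgt i j (padd a b)) m :: 'a::field)"
    by (simp add: signC[OF i])
  finally show ?thesis by simp
qed



lemma carrier_iff: "p \<in> skcarrier \<longleftrightarrow> finite {m. p m \<noteq> 0}"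
  by (simp add: skcarrier_def)

lemma carrier_sum:
  assumes "finite S" "\<And>x. x \<in> S \<Longrightarrow> G x \<in> skcarrier"
  shows "(\<lambda>m. \<Sum>x\<in>S. G x m) \<in> skcarrier"
proof -
  have "{m. (\<Sum>x\<in>S. G x m) \<noteq> 0} \<subseteq> (\<Union>x\<in>S. {m. G x m \<noteq> 0})"
    by (auto intro: sum.neutral)
  moreover have "finite (\<Union>x\<in>S. {m. G x m \<noteq> 0})"
    using assms by (auto simp: carrier_iff)
  ultimately show ?thesis by (auto simp: carrier_iff intro: finite_subset)
qed

lemma carrier_smult: "p \<in> skcarrier \<Longrightarrow> (\<lambda>m. c * p m) \<in> skcarrier"
  unfolding carrier_iff by (rule finite_subset[rotated]) auto

lemma carrier_add: "p \<in> skcarrier \<Longrightarrow> q \<in> skcarrier \<Longrightarrow> (\<lambda>m. p m + q m) \<in> skcarrier"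
  unfolding carrier_iff
  by (rule finite_subset[of _ "{m. p m \<noteq> 0} \<union> {m. q m \<noteq> 0}"]) auto

lemma carrier_mon: "mon a \<in> skcarrier"
  unfolding carrier_iff mon_def by (rule finite_subset[of _ "{a}"]) auto

lemma zero_carrier: "(\<lambda>m. 0) \<in> skcarrier"
  unfolding carrier_iff by simp

lemma lin_sum:
  assumes add: "\<forall>p\<in>skcarrier. \<forall>q\<in>skcarrier. L (skadd p q) = skadd (L p) (L q)"
    and sm: "\<forall>c. \<forall>p\<in>skcarrier. L (sksmult c p) = sksmult c (L p)"
  shows "finite S \<Longrightarrow> (\<forall>x\<in>S. G x \<in> skcarrier) \<Longrightarrow>
     L (\<lambda>m. \<Sum>x\<in>S. G x m) = (\<lambda>m. \<Sum>x\<in>S. L (G x) m)"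
proof (induction S rule: finite_induct)
  case empty
  have "L (\<lambda>m. 0) = L (sksmult 0 (\<lambda>m. 0))" by (simp add: sksmult_def)
  also have "\<dots> = sksmult 0 (L (\<lambda>m. 0))" using sm zero_carrier by blast
  finally show ?case by (simp add: sksmult_def)
next
  case (insert x F)
  have c: "(\<lambda>m. \<Sum>x\<in>F. G x m) \<in> skcarrier"
    using insert by (intro carrier_sum) auto
  have "(\<lambda>m. \<Sum>y\<in>insert x F. G y m) = skadd (G x) (\<lambda>m. \<Sum>x\<in>F. G x m)"
    using insert by (simp add: skadd_def)
  then have "L (\<lambda>m. \<Sum>y\<in>insert x F. G y m) = skadd (L (G x)) (L (\<lambda>m. \<Sum>x\<in>F. G x m))"
    using add c insert by simp
  then show ?case using insert by (simp add: skadd_def)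
qed

lemma lin_sum_smult:
  assumes add: "\<forall>p\<in>skcarrier. \<forall>q\<in>skcarrier. L (skadd p q) = skadd (L p) (L q)"
    and sm: "\<forall>c. \<forall>p\<in>skcarrier. L (sksmult c p) = sksmult c (L p)"
    and S: "finite S" "\<forall>x\<in>S. G x \<in> skcarrier"
  shows "L (\<lambda>m. \<Sum>x\<in>S. c x * G x m) = (\<lambda>m. \<Sum>x\<in>S. c x * L (G x) m)"
proof -
  have "L (\<lambda>m. \<Sum>x\<in>S. c x * G x m) = L (\<lambda>m. \<Sum>x\<in>S. sksmult (c x) (G x) m)"
    by (simp add: sksmult_def)
  also have "\<dots> = (\<lambda>m. \<Sum>x\<in>S. L (sksmult (c x) (G x)) m)"
    using S by (intro lin_sum[OF add sm]) (auto simp: sksmult_def intro: carrier_smult)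
  also have "\<dots> = (\<lambda>m. \<Sum>x\<in>S. c x * L (G x) m)"
    using S sm by (simp add: sksmult_def)
  finally show ?thesis .
qed

definition Dm :: "(nat \<Rightarrow> nat \<Rightarrow> 'k::field) \<Rightarrow> nat \<times> nat \<times> nat \<Rightarrow> 'k skp" where
  "Dm M a = (\<lambda>m. \<Sum>i\<in>{1,2,3}. \<Sum>j\<in>{1,2,3}. (M i j * dc i a) * mon (tgt i j a) m)"

definition Dfun :: "(nat \<Rightarrow> nat \<Rightarrow> 'k::field) \<Rightarrow> 'k skp \<Rightarrow> 'k skp" where
  "Dfun M p = (if p \<in> skcarrier then (\<lambda>m. \<Sum>a\<in>{a. p a \<noteq> 0}. p a * Dm M a m) else (\<lambda>_. 0))"

lemma Dfun_ext:
  assumes "p \<in> skcarrier" "finite S" "{a. p a \<noteq> 0} \<subseteq> S"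
  shows "Dfun M p m = (\<Sum>a\<in>S. p a * Dm M a m)"
  using assms unfolding Dfun_def
  by (simp, intro sum.mono_neutral_left) auto

lemma Dfun_add:
  assumes p: "p \<in> skcarrier" and q: "q \<in> skcarrier"
  shows "Dfun M (skadd p q) = skadd (Dfun M p) (Dfun M q)"
proof
  fix m
  let ?S = "{a. p a \<noteq> 0} \<union> {a. q a \<noteq> 0}"
  have f: "finite ?S" using p q by (simp add: carrier_iff)
  have pq: "skadd p q \<in> skcarrier" using carrier_add[OF p q] by (simp add: skadd_def)
  have sub: "{a. skadd p q a \<noteq> 0} \<subseteq> ?S" by (auto simp: skadd_def)
  show "Dfun M (skadd p q) m = skadd (Dfun M p) (Dfun M q) m"
    using Dfun_ext[OF pq f sub, of M m] Dfun_ext[OF p f, of M m] Dfun_ext[OF q f, of M m]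
    by (auto simp: skadd_def sum.distrib distrib_right)
qed

lemma Dfun_smult:
  assumes p: "p \<in> skcarrier"
  shows "Dfun M (sksmult c p) = sksmult c (Dfun M p)"
proof
  fix m
  let ?S = "{a. p a \<noteq> 0}"
  have f: "finite ?S" using p by (simp add: carrier_iff)
  have pq: "sksmult c p \<in> skcarrier" using carrier_smult[OF p] by (simp add: sksmult_def)
  show "Dfun M (sksmult c p) m = sksmult c (Dfun M p) m"
    using Dfun_ext[OF pq f, of M m] Dfun_ext[OF p f, of M m]
    by (auto simp: sksmult_def sum_distrib_left mult.assoc)
qed

lemma Dfun_mon: "Dfun M (mon a) = Dm M a"
proof
  fix m show "Dfun M (mon a) m = Dm M a m"
    using Dfun_ext[OF carrier_mon, of "{a}" a M m] by (simp add: mon_def)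
qed

lemma Dm_carrier: "Dm M a \<in> skcarrier"
  unfolding Dm_def
  by (intro carrier_sum carrier_smult carrier_mon) auto

lemma Dfun_carrier: "Dfun M p \<in> skcarrier"
proof (cases "p \<in> skcarrier")
  case True
  then have "(\<lambda>m. \<Sum>a\<in>{a. p a \<noteq> 0}. p a * Dm M a m) \<in> skcarrier"
    by (intro carrier_sum carrier_smult Dm_carrier) (auto simp: carrier_iff)
  then show ?thesis using True by (simp add: Dfun_def)
qed (simp add: Dfun_def zero_carrier)



lemma mdeg_tgt:
  assumes i: "i \<in> {1,2,3}" and j: "j \<in> {1,2,3}" and o: "odd (comp i a)"
  shows "mdeg (tgt i j a) = Suc (mdeg a)"
proof -
  obtain a1 a2 a3 where a: "a = (a1,a2,a3)" by (cases a) auto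
  have "i = 1 \<or> i = 2 \<or> i = 3" "j = 1 \<or> j = 2 \<or> j = 3" using i j by auto
  then show ?thesis using o unfolding a
    by (elim disjE; simp add: tgt_def ev_def mdeg_def; presburger)
qed

lemma Dm_nz:
  assumes "Dm M a m \<noteq> 0"
  shows "mdeg m = Suc (mdeg a)"
proof -
  from assms obtain i where i: "i \<in> {1,2,3}" and
    "(\<Sum>j\<in>{1,2,3}. (M i j * dc i a) * mon (tgt i j a) m) \<noteq> 0"
    unfolding Dm_def by (meson sum.not_neutral_contains_not_neutral)
  then obtain j where j: "j \<in> {1,2,3}" and nz: "(M i j * dc i a) * mon (tgt i j a) m \<noteq> 0"
    by (meson sum.not_neutral_contains_not_neutral)
  then have "odd (comp i a)" and m: "m = tgt i j a"
    by (auto simp: dc_def mon_def split: if_splits)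
  then show ?thesis using i j mdeg_tgt by blast
qed

lemma Dfun_homog:
  assumes "homog n p"
  shows "homog (Suc n) (Dfun M p)"
  unfolding homog_def
proof (intro conjI allI impI)
  show "Dfun M p \<in> skcarrier" by (rule Dfun_carrier)
  fix m assume nz: "Dfun M p m \<noteq> 0"
  have pc: "p \<in> skcarrier" using assms by (simp add: homog_def)
  then have "(\<Sum>a\<in>{a. p a \<noteq> 0}. p a * Dm M a m) \<noteq> 0" using nz by (simp add: Dfun_def)
  then obtain a where a1: "a \<in> {a. p a \<noteq> 0}" and a2: "p a * Dm M a m \<noteq> 0"
    by (rule sum.not_neutral_contains_not_neutral)
  have "mdeg a = n" using a1 assms unfolding homog_def by blast
  moreover have "mdeg m = Suc (mdeg a)" using a2 Dm_nz[of M a m] by force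
  ultimately show "mdeg m = Suc n" by simp
qed

lemma Dm_leib:
  "sg3 a b * Dm M (padd a b) m =
     skmul (Dm M a) (mon b) m + (-1) ^ mdeg a * skmul (mon a) (Dm M b) m"
proof -
  let ?I = "{1::nat,2,3}"
  have fI: "finite ?I" by simp
  have l: "skmul (Dm M a) (mon b) m =
     (\<Sum>i\<in>?I. \<Sum>j\<in>?I. M i j * (dc i a * sg3 (tgt i j a) b * mon (padd (tgt i j a) b) m))"
    unfolding Dm_def
    apply (simp only: skmul_sum_left[OF fI] skmul_smult_left skmul_mono_mono)
    apply (intro sum.cong refl)
    apply (simp only: mult.assoc)
    done
  have r: "skmul (mon a) (Dm M b) m =
     (\<Sum>i\<in>?I. \<Sum>j\<in>?I. M i j * (dc i b * sg3 a (tgt i j b) * mon (padd a (tgt i j b)) m))"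
    unfolding Dm_def
    apply (simp only: skmul_sum_right[OF fI] skmul_smult_right skmul_mono_mono)
    apply (intro sum.cong refl)
    apply (simp only: mult.assoc)
    done
  have "sg3 a b * Dm M (padd a b) m =
     (\<Sum>i\<in>?I. \<Sum>j\<in>?I. M i j * (sg3 a b * dc i (padd a b) * mon (tgt i j (padd a b)) m))"
    unfolding Dm_def
    apply (simp only: sum_distrib_left)
    apply (intro sum.cong refl)
    apply (simp only: ac_simps)
    done
  also have "\<dots> = (\<Sum>i\<in>?I. \<Sum>j\<in>?I. M i j * (dc i a * sg3 (tgt i j a) b * mon (padd (tgt i j a) b) m)
      + (-1) ^ mdeg a * (M i j * (dc i b * sg3 a (tgt i j b) * mon (padd a (tgt i j b)) m)))"
  proof (intro sum.cong refl)
    fix i j assume i: "i \<in> ?I" and j: "j \<in> ?I"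
    show "M i j * (sg3 a b * dc i (padd a b) * mon (tgt i j (padd a b)) m) =
      M i j * (dc i a * sg3 (tgt i j a) b * mon (padd (tgt i j a) b) m)
      + (-1) ^ mdeg a * (M i j * (dc i b * sg3 a (tgt i j b) * mon (padd a (tgt i j b)) m))"
      unfolding key[OF i j] by (simp only: distrib_left ac_simps)
  qed
  also have "\<dots> = skmul (Dm M a) (mon b) m + (-1) ^ mdeg a * skmul (mon a) (Dm M b) m"
    unfolding l r by (simp only: sum.distrib sum_distrib_left)
  finally show ?thesis .
qed



lemma rep:
  assumes "p \<in> skcarrier"
  shows "(\<lambda>m. \<Sum>a\<in>{a. p a \<noteq> 0}. p a * mon a m) = p"
proof
  fix m
  have "(\<Sum>a\<in>{a. p a \<noteq> 0}. p a * mon a m) = (\<Sum>a\<in>{a. p a \<noteq> 0}. if a = m then p a else 0)"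
    by (intro sum.cong) (auto simp: mon_def)
  also have "\<dots> = p m"
    using assms by (subst sum.delta) (auto simp: carrier_iff)
  finally show "(\<Sum>a\<in>{a. p a \<noteq> 0}. p a * mon a m) = p m" .
qed

lemma Dadd: "\<forall>p\<in>skcarrier. \<forall>q\<in>skcarrier. Dfun M (skadd p q) = skadd (Dfun M p) (Dfun M q)"
  using Dfun_add by blast

lemma Dsm: "\<forall>c. \<forall>p\<in>skcarrier. Dfun M (sksmult c p) = sksmult c (Dfun M p)"
  using Dfun_smult by blast

lemma Dfun_leib:
  assumes hp: "homog n p" and q: "q \<in> skcarrier"
  shows "Dfun M (skmul p q) = skadd (skmul (Dfun M p) q) (sksmult ((-1)^n) (skmul p (Dfun M q)))"
proof -
  have p: "p \<in> skcarrier" using hp by (simp add: homog_def)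
  define A where "A = {a. p a \<noteq> 0}"
  define B where "B = {b. q b \<noteq> 0}"
  have fA: "finite A" using p by (simp add: A_def carrier_iff)
  have fB: "finite B" using q by (simp add: B_def carrier_iff)
  have degA: "\<And>a. a \<in> A \<Longrightarrow> mdeg a = n" using hp by (auto simp: A_def homog_def)
  have rp: "(\<lambda>m. \<Sum>a\<in>A. p a * mon a m) = p" using rep[OF p] by (simp add: A_def)
  have rq: "(\<lambda>m. \<Sum>b\<in>B. q b * mon b m) = q" using rep[OF q] by (simp add: B_def)
  have pq: "skmul p q = (\<lambda>m. \<Sum>a\<in>A. \<Sum>b\<in>B. (p a * q b * sg3 a b) * mon (padd a b) m)"
  proof
    fix m
    have "skmul p q m = skmul (\<lambda>m. \<Sum>a\<in>A. p a * mon a m) (\<lambda>m. \<Sum>b\<in>B. q b * mon b m) m"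
      by (simp only: rp rq)
    also have "\<dots> = (\<Sum>a\<in>A. p a * (\<Sum>b\<in>B. q b * skmul (mon a) (mon b) m))"
      by (simp only: skmul_sum_left[OF fA] skmul_smult_left skmul_sum_right[OF fB] skmul_smult_right)
    also have "\<dots> = (\<Sum>a\<in>A. \<Sum>b\<in>B. (p a * q b * sg3 a b) * mon (padd a b) m)"
      by (simp only: sum_distrib_left skmul_mono_mono ac_simps)
    finally show "skmul p q m = (\<Sum>a\<in>A. \<Sum>b\<in>B. (p a * q b * sg3 a b) * mon (padd a b) m)" .
  qed
  have Gc: "\<forall>a\<in>A. (\<lambda>m. \<Sum>b\<in>B. (p a * q b * sg3 a b) * mon (padd a b) m) \<in> skcarrier"
    using fB by (auto intro!: carrier_sum carrier_smult carrier_mon)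
  have DL: "Dfun M (skmul p q) = (\<lambda>m. \<Sum>a\<in>A. \<Sum>b\<in>B. (p a * q b * sg3 a b) * Dm M (padd a b) m)"
    unfolding pq
    apply (subst lin_sum[OF Dadd Dsm fA Gc])
    apply (subst lin_sum_smult[OF Dadd Dsm fB])
    apply (simp add: carrier_mon)
    apply (simp add: Dfun_mon)
    done
  have Dp: "Dfun M p = (\<lambda>m. \<Sum>a\<in>A. p a * Dm M a m)" using p by (simp add: Dfun_def A_def)
  have Dq: "Dfun M q = (\<lambda>m. \<Sum>b\<in>B. q b * Dm M b m)" using q by (simp add: Dfun_def B_def)
  have S1: "skmul (Dfun M p) q m = (\<Sum>a\<in>A. \<Sum>b\<in>B. p a * q b * skmul (Dm M a) (mon b) m)" for m
  proof -
    have "skmul (Dfun M p) q m = skmul (\<lambda>m. \<Sum>a\<in>A. p a * Dm M a m) (\<lambda>m. \<Sum>b\<in>B. q b * mon b m) m"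
      by (simp only: Dp rq)
    also have "\<dots> = (\<Sum>a\<in>A. p a * (\<Sum>b\<in>B. q b * skmul (Dm M a) (mon b) m))"
      by (simp only: skmul_sum_left[OF fA] skmul_smult_left skmul_sum_right[OF fB] skmul_smult_right)
    finally show ?thesis by (simp only: sum_distrib_left ac_simps)
  qed
  have S2: "skmul p (Dfun M q) m = (\<Sum>a\<in>A. \<Sum>b\<in>B. p a * q b * skmul (mon a) (Dm M b) m)" for m
  proof -
    have "skmul p (Dfun M q) m = skmul (\<lambda>m. \<Sum>a\<in>A. p a * mon a m) (\<lambda>m. \<Sum>b\<in>B. q b * Dm M b m) m"
      by (simp only: Dq rp)
    also have "\<dots> = (\<Sum>a\<in>A. p a * (\<Sum>b\<in>B. q b * skmul (mon a) (Dm M b) m))"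
      by (simp only: skmul_sum_left[OF fA] skmul_smult_left skmul_sum_right[OF fB] skmul_smult_right)
    finally show ?thesis by (simp only: sum_distrib_left ac_simps)
  qed
  show ?thesis
  proof
    fix m
    have "Dfun M (skmul p q) m = (\<Sum>a\<in>A. \<Sum>b\<in>B. p a * q b * (skmul (Dm M a) (mon b) m
         + (-1)^n * skmul (mon a) (Dm M b) m))"
      unfolding DL
    proof (intro sum.cong refl)
      fix a b assume a: "a \<in> A"
      show "p a * q b * sg3 a b * Dm M (padd a b) m = p a * q b * (skmul (Dm M a) (mon b) m
         + (-1)^n * skmul (mon a) (Dm M b) m)"
        using Dm_leib[of a b M m] degA[OF a] by (simp only: mult.assoc)
    qed
    also have "\<dots> = skmul (Dfun M p) q m + (-1)^n * skmul p (Dfun M q) m"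
      unfolding S1 S2 by (simp only: sum.distrib sum_distrib_left distrib_left ac_simps)
    finally show "Dfun M (skmul p q) m = skadd (skmul (Dfun M p) q) (sksmult ((-1)^n) (skmul p (Dfun M q))) m"
      by (simp add: skadd_def sksmult_def)
  qed
qed



lemma skgen_mon: "skgen i = mon (ev i)"
  by (auto simp: skgen_def mon_def ev_def fun_eq_iff)

lemma Dfun_gen:
  assumes i: "i \<in> {1,2,3}"
  shows "Dfun M (skgen i) = (\<lambda>m. \<Sum>j\<in>{1,2,3}. M i j * skmul (skgen j) (skgen j) m)"
proof
  fix m
  have "i = 1 \<or> i = 2 \<or> i = 3" using i by auto
  then show "Dfun M (skgen i) m = (\<Sum>j\<in>{1,2,3}. M i j * skmul (skgen j) (skgen j) m)"
    unfolding skgen_mon Dfun_mon skmul_mono_mono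
    by (elim disjE) (simp_all add: Dm_def dc_def ev_def tgt_def)
qed

theorem Dfun_is_diff: "is_diff M (Dfun M)"
  unfolding is_diff_def
proof (intro conjI allI ballI impI)
  show "\<And>p. p \<notin> skcarrier \<Longrightarrow> Dfun M p = (\<lambda>_. 0)" by (simp add: Dfun_def)
  show "\<And>p. Dfun M p \<in> skcarrier" by (rule Dfun_carrier)
  show "\<And>p q. p \<in> skcarrier \<Longrightarrow> q \<in> skcarrier \<Longrightarrow> Dfun M (skadd p q) = skadd (Dfun M p) (Dfun M q)"
    by (rule Dfun_add)
  show "\<And>c p. p \<in> skcarrier \<Longrightarrow> Dfun M (sksmult c p) = sksmult c (Dfun M p)"
    by (rule Dfun_smult)
  show "\<And>n p. homog n p \<Longrightarrow> homog (Suc n) (Dfun M p)" by (rule Dfun_homog)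
  show "\<And>n p q. homog n p \<Longrightarrow> q \<in> skcarrier \<Longrightarrow>
    Dfun M (skmul p q) = skadd (skmul (Dfun M p) q) (sksmult ((-1) ^ n) (skmul p (Dfun M q)))"
    by (rule Dfun_leib)
  show "\<And>i. i \<in> {1,2,3} \<Longrightarrow> Dfun M (skgen i) = (\<lambda>m. \<Sum>j \<in> {1, 2, 3}. M i j * skmul (skgen j) (skgen j) m)"
    by (rule Dfun_gen)
qed



lemma isd_out: "is_diff M d \<Longrightarrow> p \<notin> skcarrier \<Longrightarrow> d p = (\<lambda>_. 0)"
  unfolding is_diff_def by (elim conjE) blast

lemma isd_add: "is_diff M d \<Longrightarrow> \<forall>p\<in>skcarrier. \<forall>q\<in>skcarrier. d (skadd p q) = skadd (d p) (d q)"
  unfolding is_diff_def by (elim conjE) assumption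

lemma isd_smult: "is_diff M d \<Longrightarrow> \<forall>c. \<forall>p\<in>skcarrier. d (sksmult c p) = sksmult c (d p)"
  unfolding is_diff_def by (elim conjE) assumption

lemma isd_leib: "is_diff M d \<Longrightarrow> homog n p \<Longrightarrow> q \<in> skcarrier \<Longrightarrow>
   d (skmul p q) = skadd (skmul (d p) q) (sksmult ((-1) ^ n) (skmul p (d q)))"
  unfolding is_diff_def by (elim conjE) blast

lemma isd_gen: "is_diff M d \<Longrightarrow> i \<in> {1,2,3} \<Longrightarrow>
   d (skgen i) = (\<lambda>m. \<Sum>j \<in> {1, 2, 3}. M i j * skmul (skgen j) (skgen j) m)"
  unfolding is_diff_def by (elim conjE) blast

lemma skone_mon: "skone = mon (0,0,0)"
  by (simp add: skone_def mon_def)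

lemma skmul_one_right: "skmul p skone = p"
proof
  fix m show "skmul p skone m = p m"
    unfolding skone_mon skmul_mono_right by (cases m) simp
qed

lemma skmul_one_left: "skmul skone p = p"
proof
  fix m show "skmul skone p m = p m"
    unfolding skone_mon skmul_mono_left by (cases m) simp
qed

lemma homog_mon: "homog (mdeg a) (mon a)"
  unfolding homog_def by (intro conjI carrier_mon) (simp add: mon_def)

lemma mdeg_ev: "mdeg (ev i) = 1"
  by (simp add: ev_def mdeg_def)

lemma diff_one:
  assumes d: "is_diff M d"
  shows "d skone = (\<lambda>m. 0)"
proof
  fix m
  have h: "homog 0 skone" using homog_mon[of "(0,0,0)"] by (simp add: skone_mon mdeg_def)
  have c: "skone \<in> skcarrier" by (simp add: skone_mon carrier_mon)
  have "d (skmul skone skone) = skadd (skmul (d skone) skone) (sksmult ((-1)^0) (skmul skone (d skone)))"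
    using isd_leib[OF d h c] .
  then have "d skone m = skadd (skmul (d skone) skone) (sksmult ((-1)^0) (skmul skone (d skone))) m"
    by (simp only: skmul_one_left)
  then have "d skone m + 0 = d skone m + d skone m"
    by (simp only: skmul_one_left skmul_one_right skadd_def sksmult_def power_0 mult_1_left add_0_right)
  then show "d skone m = 0" by (rule add_left_imp_eq[symmetric])
qed

lemma mon_shift:
  assumes "sg3 (ev i) b = (1::'k::field)" "padd (ev i) b = a"
  shows "mon a = (skmul (skgen i) (mon b) :: 'k skp)"
proof
  fix m show "mon a m = (skmul (skgen i) (mon b) m :: 'k)"
    using assms by (simp only: skgen_mon skmul_mono_mono mult_1_left)
qed

lemma mon_decomp:
  assumes "mdeg a = Suc n"
  shows "\<exists>i\<in>{1,2,3}. \<exists>a'. mdeg a' = n \<and> mon a = skmul (skgen i) (mon a')"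
proof -
  obtain a1 a2 a3 where a: "a = (a1,a2,a3)" by (cases a) auto
  have s: "a1 + a2 + a3 = Suc n" using assms by (simp add: a mdeg_def)
  show ?thesis
  proof (cases "a1 > 0")
    case True
    have "mon a = skmul (skgen 1) (mon (a1 - 1, a2, a3))"
      by (rule mon_shift) (use True in \<open>simp_all add: ev_def a\<close>)
    moreover have "mdeg (a1 - 1, a2, a3) = n" using s True by (simp add: mdeg_def)
    ultimately show ?thesis by blast
  next
    case f1: False
    show ?thesis
    proof (cases "a2 > 0")
      case True
      have "mon a = skmul (skgen 2) (mon (a1, a2 - 1, a3))"
        by (rule mon_shift) (use True f1 in \<open>simp_all add: ev_def a\<close>)
      moreover have "mdeg (a1, a2 - 1, a3) = n" using s True by (simp add: mdeg_def)
      ultimately show ?thesis by blast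
    next
      case f2: False
      have t: "a3 > 0" using s f1 f2 by simp
      have "mon a = skmul (skgen 3) (mon (a1, a2, a3 - 1))"
        by (rule mon_shift) (use t f1 f2 in \<open>simp_all add: ev_def a\<close>)
      moreover have "mdeg (a1, a2, a3 - 1) = n" using s t by (simp add: mdeg_def)
      ultimately show ?thesis by blast
    qed
  qed
qed

lemma diff_mon_unique:
  fixes M :: "nat \<Rightarrow> nat \<Rightarrow> 'k::field"
  assumes d1: "is_diff M d1" and d2: "is_diff M d2"
  shows "mdeg a = n \<Longrightarrow> d1 (mon a) = d2 (mon a)"
proof (induction n arbitrary: a)
  case 0
  then have "a = (0,0,0)" by (cases a) (simp add: mdeg_def)
  then show ?case using diff_one[OF d1] diff_one[OF d2] by (simp add: skone_mon)
next
  case (Suc n)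
  obtain i a' where i: "i \<in> {1,2,3}" and a': "mdeg a' = n" and eq: "mon a = (skmul (skgen i) (mon a') :: 'k skp)"
    using mon_decomp[OF Suc.prems] by blast
  have hg: "homog 1 (skgen i)"
    using homog_mon[of "ev i"] by (simp only: skgen_mon mdeg_ev)
  have L1: "d1 (mon a) = skadd (skmul (d1 (skgen i)) (mon a')) (sksmult ((-1)^1) (skmul (skgen i) (d1 (mon a'))))"
    unfolding eq by (rule isd_leib[OF d1 hg carrier_mon])
  have L2: "d2 (mon a) = skadd (skmul (d2 (skgen i)) (mon a')) (sksmult ((-1)^1) (skmul (skgen i) (d2 (mon a'))))"
    unfolding eq by (rule isd_leib[OF d2 hg carrier_mon])
  have g: "d1 (skgen i) = d2 (skgen i)"
    using isd_gen[OF d1 i] isd_gen[OF d2 i] by simp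
  show ?case using L1 L2 g Suc.IH[OF a'] by simp
qed

lemma diff_unique:
  assumes d1: "is_diff M d1" and d2: "is_diff M d2"
  shows "d1 = d2"
proof
  fix p
  show "d1 p = d2 p"
  proof (cases "p \<in> skcarrier")
    case False
    then show ?thesis using isd_out[OF d1] isd_out[OF d2] by simp
  next
    case True
    have f: "finite {a. p a \<noteq> 0}" using True by (simp add: carrier_iff)
    have lin1: "\<forall>p\<in>skcarrier. \<forall>q\<in>skcarrier. d1 (skadd p q) = skadd (d1 p) (d1 q)"
      "\<forall>c. \<forall>p\<in>skcarrier. d1 (sksmult c p) = sksmult c (d1 p)"
      using isd_add[OF d1] isd_smult[OF d1] by blast+
    have lin2: "\<forall>p\<in>skcarrier. \<forall>q\<in>skcarrier. d2 (skadd p q) = skadd (d2 p) (d2 q)"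
      "\<forall>c. \<forall>p\<in>skcarrier. d2 (sksmult c p) = sksmult c (d2 p)"
      using isd_add[OF d2] isd_smult[OF d2] by blast+
    have "d1 p = d1 (\<lambda>m. \<Sum>a\<in>{a. p a \<noteq> 0}. p a * mon a m)" using rep[OF True] by simp
    also have "\<dots> = (\<lambda>m. \<Sum>a\<in>{a. p a \<noteq> 0}. p a * d1 (mon a) m)"
      by (rule lin_sum_smult[OF lin1 f]) (simp add: carrier_mon)
    also have "\<dots> = (\<lambda>m. \<Sum>a\<in>{a. p a \<noteq> 0}. p a * d2 (mon a) m)"
      using diff_mon_unique[OF d1 d2] by simp
    also have "\<dots> = d2 (\<lambda>m. \<Sum>a\<in>{a. p a \<noteq> 0}. p a * mon a m)"
      by (rule lin_sum_smult[OF lin2 f, symmetric]) (simp add: carrier_mon)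
    also have "\<dots> = d2 p" using rep[OF True] by simp
    finally show ?thesis .
  qed
qed

theorem dga_diff_eq: "dga_diff M = Dfun M"
  unfolding dga_diff_def
  apply (rule the_equality)
   apply (rule Dfun_is_diff)
  apply (erule diff_unique[OF _ Dfun_is_diff])
  done



fun cw :: "'k::field \<times> 'k \<times> 'k \<Rightarrow> nat \<times> nat \<times> nat \<Rightarrow> 'k" where
  "cw (c1,c2,c3) (m1,m2,m3) = c1 ^ m1 * c2 ^ m2 * c3 ^ m3"

fun cv :: "'k::field \<times> 'k \<times> 'k \<Rightarrow> nat \<Rightarrow> 'k" where
  "cv (c1,c2,c3) i = (if i = 1 then c1 else if i = 2 then c2 else c3)"

definition scal :: "'k::field \<times> 'k \<times> 'k \<Rightarrow> 'k skp \<Rightarrow> 'k skp" where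
  "scal c p = (\<lambda>m. cw c m * p m)"

fun cinv :: "'k::field \<times> 'k \<times> 'k \<Rightarrow> 'k \<times> 'k \<times> 'k" where
  "cinv (c1,c2,c3) = (inverse c1, inverse c2, inverse c3)"

fun cnz :: "'k::field \<times> 'k \<times> 'k \<Rightarrow> bool" where
  "cnz (c1,c2,c3) \<longleftrightarrow> c1 \<noteq> 0 \<and> c2 \<noteq> 0 \<and> c3 \<noteq> 0"

lemma cw_nz: "cnz c \<Longrightarrow> cw c m \<noteq> 0"
  by (cases c; cases m) auto

lemma cnz_inv: "cnz c \<Longrightarrow> cnz (cinv c)"
  by (cases c) auto

lemma cw_inv: "cnz c \<Longrightarrow> cw (cinv c) m * cw c m = 1"
  by (cases c; cases m) (simp add: power_inverse field_simps)

lemma cw_inv2: "cnz c \<Longrightarrow> cw c m * cw (cinv c) m = 1"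
  using cw_inv by (metis mult.commute)

lemma scal_supp: "cnz c \<Longrightarrow> {m. scal c p m \<noteq> 0} = {m. p m \<noteq> 0}"
  unfolding scal_def using cw_nz[of c] by auto

lemma scal_carrier: "cnz c \<Longrightarrow> p \<in> skcarrier \<Longrightarrow> scal c p \<in> skcarrier"
  by (simp add: carrier_iff scal_supp)

lemma scal_inv: assumes "cnz c" shows "scal (cinv c) (scal c p) = p"
  unfolding scal_def using cw_inv[OF assms] by (simp add: mult.assoc[symmetric])

lemma scal_inv2: assumes "cnz c" shows "scal c (scal (cinv c) p) = p"
  unfolding scal_def using cw_inv2[OF assms] by (simp add: mult.assoc[symmetric])

lemma cw_split:
  assumes "pleq a m"
  shows "cw c m = cw c a * cw c (psub m a)"
proof -
  obtain c1 c2 c3 where c: "c = (c1,c2,c3)" by (cases c) auto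
  obtain a1 a2 a3 where a: "a = (a1,a2,a3)" by (cases a) auto
  obtain m1 m2 m3 where m: "m = (m1,m2,m3)" by (cases m) auto
  have "m1 = a1 + (m1 - a1)" "m2 = a2 + (m2 - a2)" "m3 = a3 + (m3 - a3)"
    using assms by (auto simp: a m)
  then have "c1 ^ m1 * c2 ^ m2 * c3 ^ m3 = (c1 ^ a1 * c2 ^ a2 * c3 ^ a3) * (c1 ^ (m1 - a1) * c2 ^ (m2 - a2) * c3 ^ (m3 - a3))"
    by (metis (no_types, lifting) power_add mult.commute mult.left_commute)
  then show ?thesis by (simp add: c a m)
qed

lemma psub_expand: "psub (m1,m2,m3) x = (m1 - fst x, m2 - fst (snd x), m3 - snd (snd x))"
  by (cases x) simp

lemma scal_mul: "scal c (skmul p q) = skmul (scal c p) (scal c q)"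
proof
  fix m :: "nat \<times> nat \<times> nat"
  obtain m1 m2 m3 where m: "m = (m1,m2,m3)" by (cases m) auto
  have "scal c (skmul p q) m = (\<Sum>x \<in> {0..m1} \<times> {0..m2} \<times> {0..m3}. cw c m *
       ((-1) ^ ((m1 - fst x) * (fst (snd x) + snd (snd x)) + (m2 - fst (snd x)) * snd (snd x)) * p x * q (psub m x)))"
    unfolding scal_def skmul_def m by (simp add: sum_distrib_left case_prod_beta psub_expand)
  also have "\<dots> = (\<Sum>x \<in> {0..m1} \<times> {0..m2} \<times> {0..m3}.
       ((-1) ^ ((m1 - fst x) * (fst (snd x) + snd (snd x)) + (m2 - fst (snd x)) * snd (snd x)) * (cw c x * p x) * (cw c (psub m x) * q (psub m x))))"
  proof (intro sum.cong refl)
    fix x assume "x \<in> {0..m1} \<times> {0..m2} \<times> {0..m3}"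
    then have "pleq x m" by (cases x) (auto simp: m)
    then show "cw c m * ((-1) ^ ((m1 - fst x) * (fst (snd x) + snd (snd x)) + (m2 - fst (snd x)) * snd (snd x)) * p x * q (psub m x))
      = (-1) ^ ((m1 - fst x) * (fst (snd x) + snd (snd x)) + (m2 - fst (snd x)) * snd (snd x)) * (cw c x * p x) * (cw c (psub m x) * q (psub m x))"
      using cw_split[of x m c] by (simp add: ac_simps)
  qed
  also have "\<dots> = skmul (scal c p) (scal c q) m"
    unfolding scal_def skmul_def m by (simp add: case_prod_beta psub_expand ac_simps)
  finally show "scal c (skmul p q) m = skmul (scal c p) (scal c q) m" .
qed



lemma cw_tgt:
  assumes i: "i \<in> {1,2,3}" and j: "j \<in> {1,2,3}" and o: "odd (comp i a)"
  shows "cw c (tgt i j a) * cv c i = cw c a * cv c j ^ 2"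
proof -
  obtain c1 c2 c3 where c: "c = (c1,c2,c3)" by (cases c) auto
  obtain a1 a2 a3 where a: "a = (a1,a2,a3)" by (cases a) auto
  obtain k where k: "comp i a = Suc k" using o by (cases "comp i a") auto
  have "i = 1 \<or> i = 2 \<or> i = 3" "j = 1 \<or> j = 2 \<or> j = 3" using i j by auto
  then show ?thesis using k unfolding c a
    by (elim disjE) (simp_all add: tgt_def ev_def power2_eq_square power_add ac_simps)
qed

lemma cv_nz: "cnz c \<Longrightarrow> cv c i \<noteq> 0"
  by (cases c) auto

lemma Dm_scal:
  assumes rel: "\<forall>i\<in>{1,2,3}. \<forall>j\<in>{1,2,3}. M i j * cv c j ^ 2 = cv c i * N i j"
    and nz: "cnz c"
  shows "cw c m * Dm M a m = cw c a * Dm N a m"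
  unfolding Dm_def sum_distrib_left
proof (intro sum.cong refl)
  fix i j assume i: "i \<in> {1::nat,2,3}" and j: "j \<in> {1::nat,2,3}"
  show "cw c m * (M i j * dc i a * mon (tgt i j a) m) = cw c a * (N i j * dc i a * mon (tgt i j a) m)"
  proof (cases "odd (comp i a) \<and> m = tgt i j a")
    case True
    then have o: "odd (comp i a)" and m: "m = tgt i j a" by auto
    have t: "cw c (tgt i j a) * cv c i = cw c a * cv c j ^ 2" by (rule cw_tgt[OF i j o])
    have r: "M i j * cv c j ^ 2 = cv c i * N i j" using rel i j by blast
    have "cw c (tgt i j a) * M i j * cv c i = cw c a * N i j * cv c i"
    proof -
      have "cw c (tgt i j a) * M i j * cv c i = M i j * (cw c (tgt i j a) * cv c i)" by (simp add: ac_simps)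
      also have "\<dots> = cw c a * (M i j * cv c j ^ 2)" unfolding t by (simp only: ac_simps)
      also have "\<dots> = cw c a * N i j * cv c i" by (simp add: r ac_simps)
      finally show ?thesis .
    qed
    then have "cw c (tgt i j a) * M i j = cw c a * N i j" using cv_nz[OF nz, of i] by simp
    then show ?thesis unfolding m by (simp add: mon_def)
  next
    case False
    then show ?thesis by (auto simp: dc_def mon_def)
  qed
qed

lemma Dfun_scal:
  assumes rel: "\<forall>i\<in>{1,2,3}. \<forall>j\<in>{1,2,3}. M i j * cv c j ^ 2 = cv c i * N i j"
    and nz: "cnz c" and p: "p \<in> skcarrier"
  shows "scal c (Dfun M p) = Dfun N (scal c p)"
proof
  fix m
  let ?S = "{a. p a \<noteq> 0}"
  have f: "finite ?S" using p by (simp add: carrier_iff)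
  have "scal c (Dfun M p) m = cw c m * (\<Sum>a\<in>?S. p a * Dm M a m)"
    using Dfun_ext[OF p f, of M m] by (simp add: scal_def)
  also have "\<dots> = (\<Sum>a\<in>?S. scal c p a * Dm N a m)"
    unfolding sum_distrib_left
  proof (intro sum.cong refl)
    fix a show "cw c m * (p a * Dm M a m) = scal c p a * Dm N a m"
      using Dm_scal[OF rel nz, of m a] by (simp add: scal_def ac_simps)
  qed
  also have "\<dots> = Dfun N (scal c p) m"
    using Dfun_ext[OF scal_carrier[OF nz p] f, of N m] scal_supp[OF nz, of p] by simp
  finally show "scal c (Dfun M p) m = Dfun N (scal c p) m" .
qed

lemma iso_diag:
  assumes rel: "\<forall>i\<in>{1,2,3}. \<forall>j\<in>{1,2,3}. M i j * cv c j ^ 2 = cv c i * N i j"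
    and nz: "cnz c"
  shows "dga_iso M N"
  unfolding dga_iso_def
proof (intro exI[of _ "scal c"] conjI allI ballI impI)
  show "bij_betw (scal c) skcarrier skcarrier"
    by (rule bij_betw_byWitness[where f' = "scal (cinv c)"])
      (auto simp: scal_inv[OF nz] scal_inv2[OF nz] scal_carrier[OF nz] scal_carrier[OF cnz_inv[OF nz]])
  show "\<And>p q. scal c (skadd p q) = skadd (scal c p) (scal c q)"
    by (simp add: scal_def skadd_def distrib_left)
  show "\<And>c' p. scal c (sksmult c' p) = sksmult c' (scal c p)"
    by (simp add: scal_def sksmult_def ac_simps)
  show "\<And>p q. scal c (skmul p q) = skmul (scal c p) (scal c q)"
    by (rule scal_mul)
  show "scal c skone = skone"
    by (cases c) (auto simp: scal_def skone_def fun_eq_iff)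
  show "\<And>n p. homog n p \<Longrightarrow> homog n (scal c p)"
    unfolding homog_def using scal_carrier[OF nz] scal_supp[OF nz] by blast
  show "\<And>p. p \<in> skcarrier \<Longrightarrow> scal c (dga_diff M p) = dga_diff N (scal c p)"
    unfolding dga_diff_eq by (rule Dfun_scal[OF rel nz])
qed



theorem lemma7p3:
  fixes m11 m12 m13 l1 l2 :: "'k::{alg_closed_field, field_char_0}"
  assumes "(m11, m12, m13) \<noteq> (0, 0, 0)"
    and "m12 * l1 ^ 2 + m13 * l2 ^ 2 = m11"
    and "l1 = 0"
    and "l2 \<noteq> 0"
  shows "(m12 \<noteq> 0 \<and> m13 \<noteq> 0 \<longrightarrow>
           dga_iso (mat3 m11 m12 m13 (l1 * m11) (l1 * m12) (l1 * m13) (l2 * m11) (l2 * m12) (l2 * m13))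
                   (mat3 1 1 1 0 0 0 1 1 1)) \<and>
         (m12 = 0 \<and> m13 \<noteq> 0 \<longrightarrow>
           dga_iso (mat3 m11 m12 m13 (l1 * m11) (l1 * m12) (l1 * m13) (l2 * m11) (l2 * m12) (l2 * m13))
                   (mat3 1 0 1 0 0 0 1 0 1)) \<and>
         (m12 \<noteq> 0 \<and> m13 = 0 \<longrightarrow>
           dga_iso (mat3 m11 m12 m13 (l1 * m11) (l1 * m12) (l1 * m13) (l2 * m11) (l2 * m12) (l2 * m13))
                   (mat3 0 1 0 0 0 0 0 1 0))"
proof (intro conjI impI)
  have l1: "l1 = 0" by fact
  have m11: "m11 = m13 * l2 ^ 2" using assms(2) l1 by simp
  have l2: "l2 \<noteq> 0" by fact
  {
    assume h: "m12 \<noteq> 0 \<and> m13 \<noteq> 0"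
    have n11: "m11 \<noteq> 0" using h l2 m11 by simp
    obtain y :: 'k where y: "y ^ 2 = inverse m11 / m12" using nth_root_exists[of 2] by auto
    have yn: "y \<noteq> 0" using y n11 h by auto
    show "dga_iso (mat3 m11 m12 m13 (l1 * m11) (l1 * m12) (l1 * m13) (l2 * m11) (l2 * m12) (l2 * m13))
                   (mat3 1 1 1 0 0 0 1 1 1)"
    proof (rule iso_diag[where c = "(inverse m11, y, l2 / m11)"])
      show "cnz (inverse m11, y, l2 / m11)" using n11 yn l2 by simp
      show "\<forall>i\<in>{1,2,3}. \<forall>j\<in>{1,2,3}. mat3 m11 m12 m13 (l1 * m11) (l1 * m12) (l1 * m13) (l2 * m11) (l2 * m12) (l2 * m13) i j * cv (inverse m11, y, l2 / m11) j ^ 2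
            = cv (inverse m11, y, l2 / m11) i * mat3 1 1 1 0 0 0 1 1 1 i j"
        using n11 h l2 y l1 unfolding m11 by (simp add: mat3_def field_simps power2_eq_square)
    qed
  }
  {
    assume h: "m12 = 0 \<and> m13 \<noteq> 0"
    have n11: "m11 \<noteq> 0" using h l2 m11 by simp
    show "dga_iso (mat3 m11 m12 m13 (l1 * m11) (l1 * m12) (l1 * m13) (l2 * m11) (l2 * m12) (l2 * m13))
                   (mat3 1 0 1 0 0 0 1 0 1)"
    proof (rule iso_diag[where c = "(inverse m11, 1, l2 / m11)"])
      show "cnz (inverse m11, 1, l2 / m11)" using n11 l2 by simp
      show "\<forall>i\<in>{1,2,3}. \<forall>j\<in>{1,2,3}. mat3 m11 m12 m13 (l1 * m11) (l1 * m12) (l1 * m13) (l2 * m11) (l2 * m12) (l2 * m13) i j * cv (inverse m11, 1, l2 / m11) j ^ 2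
            = cv (inverse m11, 1, l2 / m11) i * mat3 1 0 1 0 0 0 1 0 1 i j"
        using n11 h l2 l1 unfolding m11 by (simp add: mat3_def field_simps power2_eq_square)
    qed
  }
  {
    assume h: "m12 \<noteq> 0 \<and> m13 = 0"
    have z11: "m11 = 0" using h m11 by simp
    show "dga_iso (mat3 m11 m12 m13 (l1 * m11) (l1 * m12) (l1 * m13) (l2 * m11) (l2 * m12) (l2 * m13))
                   (mat3 0 1 0 0 0 0 0 1 0)"
    proof (rule iso_diag[where c = "(m12, 1, l2 * m12)"])
      show "cnz (m12, 1, l2 * m12)" using h l2 by simp
      show "\<forall>i\<in>{1,2,3}. \<forall>j\<in>{1,2,3}. mat3 m11 m12 m13 (l1 * m11) (l1 * m12) (l1 * m13) (l2 * m11) (l2 * m12) (l2 * m13) i j * cv (m12, 1, l2 * m12) j ^ 2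
            = cv (m12, 1, l2 * m12) i * mat3 0 1 0 0 0 0 0 1 0 i j"
        using h l2 z11 l1 by (simp add: mat3_def)
    qed
  }
qed

end
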